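(* Let $x\in\mathcal{T}$ and let $x^*$ be its condensed form. Then the equivalence class of $x$ under warping identification is $$[x] := \{y\in\mathcal{T} : \delta(x,y)=0\} = \{y\in\mathcal{T} : y \succ x^*\}.$$
   Context: A time series of length $n\ge1$ is a finite real sequence $x=(x_1,\dots,x_n)$; $\mathcal{T}$ is the set of all time series of finite length. For $m,n\in\mathbb{N}$, a warping path of order $m\times n$ is a sequence $p=(p_1,\dots,p_\ell)$ of points in $[m]\times[n]$ ($[n]=\{1,\dots,n\}$) with $p_1=(1,1)$, $p_\ell=(m,n)$, $p_{l+1}-p_l\in\{(1,0),(0,1),(1,1)\}$; $\mathcal{P}_{m,n}$ is the set of these. The dtw-distance of $x$ (length $m$) and $y$ (length $n$) is $\delta(x,y)=\min_{p\in\mathcal{P}_{m,n}}\big(\sum_{(i,j)\in p}(x_i-y_j)^2\big)^{1/2}$. A time series $x'$ is an expansion of $x=(x_1,\dots,x_n)$, written $x'\succ x$ (equivalently $x\prec x'$, $x$ is a compression of $x'$), if there are integers $\alpha_1,\dots,\alpha_n\ge1$ such that $x'=(\underbrace{x_1,\dots,x_1}_{\alpha_1},\dots,\underbrace{x_n,\dots,x_n}_{\alpha_n})$. A time series is irreducible if no two consecutive elements are equal (equivalently, it is not an expansion of a shorter time series). The condensed form $x^*$ of $x$ is the (unique) irreducible time series with $x\succ x^*$, obtained by collapsing each maximal run of consecutive equal values to a single element. *)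

theory Defs
  imports Complex_Main
begin

text \<open>Time series are nonempty lists of reals; the element x_i (1-based) is x ! (i-1).\<close>

definition time_series :: "real list \<Rightarrow> bool" where
  "time_series x \<longleftrightarrow> x \<noteq> []"

definition warping_path :: "nat \<Rightarrow> nat \<Rightarrow> (nat \<times> nat) list \<Rightarrow> bool" where
  "warping_path m n p \<longleftrightarrow>
     p \<noteq> [] \<and> hd p = (1, 1) \<and> last p = (m, n) \<and>
     (\<forall>(i, j) \<in> set p. 1 \<le> i \<and> i \<le> m \<and> 1 \<le> j \<and> j \<le> n) \<and>
     (\<forall>l. Suc l < length p \<longrightarrow>
        (fst (p ! Suc l), snd (p ! Suc l)) \<in>
          {(fst (p ! l) + 1, snd (p ! l)), (fst (p ! l), snd (p ! l) + 1),
           (fst (p ! l) + 1, snd (p ! l) + 1)})"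

definition warping_paths :: "nat \<Rightarrow> nat \<Rightarrow> (nat \<times> nat) list set" where
  "warping_paths m n = {p. warping_path m n p}"

definition path_cost :: "real list \<Rightarrow> real list \<Rightarrow> (nat \<times> nat) list \<Rightarrow> real" where
  "path_cost x y p = (\<Sum>(i, j) \<leftarrow> p. (x ! (i - 1) - y ! (j - 1))^2)"

definition dtw :: "real list \<Rightarrow> real list \<Rightarrow> real" where
  "dtw x y = Min ((\<lambda>p. sqrt (path_cost x y p)) ` warping_paths (length x) (length y))"

definition expansion :: "real list \<Rightarrow> real list \<Rightarrow> bool" where
  "expansion x' x \<longleftrightarrow>
     (\<exists>\<alpha> :: nat list. length \<alpha> = length x \<and> (\<forall>a \<in> set \<alpha>. a \<ge> 1) \<and>
        x' = concat (map2 replicate \<alpha> x))"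

definition condensed :: "real list \<Rightarrow> real list" where
  "condensed x = remdups_adj x"

end

theory Submission
  imports Defs
begin


lemma ra_cong: "remdups_adj L1 = remdups_adj L2 \<Longrightarrow> remdups_adj (c#L1) = remdups_adj (c#L2)"
  by (simp add: remdups_adj_Cons)

lemma ra_rep: "remdups_adj (replicate (Suc k) c @ L) = remdups_adj (c # L)"
  by (induction k) auto

lemma ra_idem: "remdups_adj (remdups_adj xs) = remdups_adj xs"
proof (induction xs rule: remdups_adj.induct)
  case (3 x y xs)
  show ?case
  proof (cases "x = y")
    case True then show ?thesis using 3 by simp
  next
    case False
    obtain t where t: "remdups_adj (y#xs) = y # t" using remdups_adj_Cons_alt[of y xs] by metis
    have "remdups_adj (remdups_adj (x # y # xs)) = remdups_adj (x # y # t)" using False t by simp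
    also have "\<dots> = x # remdups_adj (y # t)" using False by simp
    also have "\<dots> = x # remdups_adj (y # xs)" using 3(2)[OF False] t by simp
    finally show ?thesis using False by simp
  qed
qed auto

lemma ra_exp: "length \<alpha> = length z \<Longrightarrow> \<forall>a\<in>set \<alpha>. a \<ge> 1 \<Longrightarrow>
   remdups_adj (concat (map2 replicate \<alpha> z)) = remdups_adj z"
proof (induction z arbitrary: \<alpha>)
  case Nil then show ?case by simp
next
  case (Cons c z)
  then obtain k \<alpha>' where a: "\<alpha> = k # \<alpha>'" by (cases \<alpha>) auto
  with Cons.prems obtain k' where k: "k = Suc k'" by (cases k) auto
  have "remdups_adj (concat (map2 replicate \<alpha> (c#z))) = remdups_adj (replicate (Suc k') c @ concat (map2 replicate \<alpha>' z))"
    using a k by simp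
  also have "\<dots> = remdups_adj (c # concat (map2 replicate \<alpha>' z))" by (rule ra_rep)
  also have "\<dots> = remdups_adj (c # z)" by (rule ra_cong, rule Cons.IH) (use Cons.prems a in auto)
  finally show ?case .
qed

lemma exp_ra: "expansion y (remdups_adj y)"
proof (induction y)
  case Nil then show ?case by (simp add: expansion_def)
next
  case (Cons c y)
  then obtain \<alpha> where a: "length \<alpha> = length (remdups_adj y)" "\<forall>a\<in>set \<alpha>. a \<ge> 1"
     "y = concat (map2 replicate \<alpha> (remdups_adj y))" by (auto simp: expansion_def)
  show ?case
  proof (cases "y = []")
    case True then show ?thesis by (auto simp: expansion_def intro!: exI[of _ "[1]"])
  next
    case False
    then obtain d r where r: "remdups_adj y = d # r" by (cases "remdups_adj y") auto
    have hd: "hd y = d" using r hd_remdups_adj[of y] by simp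
    obtain k \<alpha>' where al: "\<alpha> = k # \<alpha>'" using a(1) r by (cases \<alpha>) auto
    show ?thesis
    proof (cases "c = d")
      case True
      have "remdups_adj (c#y) = d # r" using r True by (simp add: remdups_adj_Cons)
      then show ?thesis unfolding expansion_def using a al True r
        by (intro exI[of _ "Suc k # \<alpha>'"]) auto
    next
      case False
      have "remdups_adj (c#y) = c # d # r" using r False by (simp add: remdups_adj_Cons)
      then show ?thesis unfolding expansion_def using a al False r
        by (intro exI[of _ "1 # \<alpha>"]) auto
    qed
  qed
qed

lemma exp_iff: "y \<noteq> [] \<Longrightarrow> expansion y (remdups_adj x) \<longleftrightarrow> remdups_adj y = remdups_adj x"
proof
  assume "expansion y (remdups_adj x)"
  then show "remdups_adj y = remdups_adj x" unfolding expansion_def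
    using ra_exp ra_idem by metis
next
  assume "remdups_adj y = remdups_adj x"
  then show "expansion y (remdups_adj x)" using exp_ra by metis
qed



lemma wp_cons:
  assumes w: "warping_path m n p" and d: "(di,dj) \<in> {(1,0),(0,1),(1,1)}"
  shows "warping_path (m+di) (n+dj) ((1,1) # map (\<lambda>(i,j). (i+di, j+dj)) p)"
proof -
  from w have ne: "p \<noteq> []" and h: "hd p = (1,1)" and l: "last p = (m,n)"
    and b: "\<forall>(i, j) \<in> set p. 1 \<le> i \<and> i \<le> m \<and> 1 \<le> j \<and> j \<le> n"
    and s: "\<forall>l. Suc l < length p \<longrightarrow>
        (fst (p ! Suc l), snd (p ! Suc l)) \<in>
          {(fst (p ! l) + 1, snd (p ! l)), (fst (p ! l), snd (p ! l) + 1),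
           (fst (p ! l) + 1, snd (p ! l) + 1)}"
    unfolding warping_path_def by auto
  let ?q = "(1::nat,1::nat) # map (\<lambda>(i,j). (i+di, j+dj)) p"
  have p0: "p ! 0 = (1,1)" using h ne by (simp add: hd_conv_nth)
  have "last ?q = (m+di, n+dj)" using l ne by (simp add: last_map)
  moreover have "\<forall>(i, j) \<in> set ?q. 1 \<le> i \<and> i \<le> m+di \<and> 1 \<le> j \<and> j \<le> n+dj"
  proof -
    have "1 \<le> m \<and> 1 \<le> n" using b hd_in_set[OF ne] h by auto
    then show ?thesis using b d by auto
  qed
  moreover have "\<forall>l. Suc l < length ?q \<longrightarrow>
        (fst (?q ! Suc l), snd (?q ! Suc l)) \<in>
          {(fst (?q ! l) + 1, snd (?q ! l)), (fst (?q ! l), snd (?q ! l) + 1),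
           (fst (?q ! l) + 1, snd (?q ! l) + 1)}"
  proof (intro allI impI)
    fix l assume L: "Suc l < length ?q"
    show "(fst (?q ! Suc l), snd (?q ! Suc l)) \<in>
          {(fst (?q ! l) + 1, snd (?q ! l)), (fst (?q ! l), snd (?q ! l) + 1),
           (fst (?q ! l) + 1, snd (?q ! l) + 1)}"
    proof (cases l)
      case 0 then show ?thesis using p0 ne d by auto
    next
      case (Suc l')
      then have "Suc l' < length p" using L by simp
      then show ?thesis using s[rule_format, of l'] Suc
        by (auto simp: split_beta)
    qed
  qed
  ultimately show ?thesis unfolding warping_path_def by simp
qed

lemma path_exists:
  "x \<noteq> [] \<Longrightarrow> y \<noteq> [] \<Longrightarrow> remdups_adj x = remdups_adj y \<Longrightarrow>
   \<exists>p. warping_path (length x) (length y) p \<and> (\<forall>(i,j)\<in>set p. x!(i-1) = y!(j-1))"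
proof (induction "length x + length y" arbitrary: x y rule: less_induct)
  case less
  obtain a x' where x: "x = a # x'" using less.prems by (cases x) auto
  obtain b y' where y: "y = b # y'" using less.prems by (cases y) auto
  have ab: "a = b" using hd_remdups_adj[of x] hd_remdups_adj[of y] less.prems(3) x y by (metis list.sel(1))
  have bnd: "\<And>m n p i j. warping_path m n p \<Longrightarrow> (i,j) \<in> set p \<Longrightarrow> 1 \<le> i \<and> 1 \<le> j"
    unfolding warping_path_def by blast
  show ?case
  proof (cases "x' \<noteq> [] \<and> hd x' = a")
    case True
    have "remdups_adj x' = remdups_adj y" using True less.prems(3) x
      by (cases x') auto
    then obtain p where p: "warping_path (length x') (length y) p" "\<forall>(i,j)\<in>set p. x'!(i-1) = y!(j-1)"
      using less.hyps[of x' y] True less.prems x by auto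
    have "warping_path (length x) (length y) ((1,1) # map (\<lambda>(i,j). (i+1, j+0)) p)"
      using wp_cons[OF p(1), of 1 0] x by simp
    moreover have "\<forall>(i,j)\<in>set ((1,1) # map (\<lambda>(i,j). (i+1, j+0)) p). x!(i-1) = y!(j-1)"
    proof -
      have "x!0 = y!0" using x y ab by simp
      moreover have "x!(i+1-1) = y!(j-1)" if "(i,j) \<in> set p" for i j
        using p(2) that bnd[OF p(1) that] x by (auto simp: nth_Cons')
      ultimately show ?thesis by auto
    qed
    ultimately show ?thesis by blast
  next
    case F1: False
    show ?thesis
    proof (cases "y' \<noteq> [] \<and> hd y' = b")
      case True
      have "remdups_adj x = remdups_adj y'" using True less.prems(3) y
        by (cases y') auto
      then obtain p where p: "warping_path (length x) (length y') p" "\<forall>(i,j)\<in>set p. x!(i-1) = y'!(j-1)"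
        using less.hyps[of x y'] True less.prems y by auto
      have "warping_path (length x) (length y) ((1,1) # map (\<lambda>(i,j). (i+0, j+1)) p)"
        using wp_cons[OF p(1), of 0 1] y by simp
      moreover have "\<forall>(i,j)\<in>set ((1,1) # map (\<lambda>(i,j). (i+0, j+1)) p). x!(i-1) = y!(j-1)"
      proof -
        have "x!0 = y!0" using x y ab by simp
        moreover have "x!(i-1) = y!(j+1-1)" if "(i,j) \<in> set p" for i j
          using p(2) that bnd[OF p(1) that] y by (auto simp: nth_Cons')
        ultimately show ?thesis by auto
      qed
      ultimately show ?thesis by blast
    next
      case F2: False
      have rx: "remdups_adj x = a # remdups_adj x'" using F1 x
        by (cases x') auto
      have ry: "remdups_adj y = b # remdups_adj y'" using F2 y
        by (cases y') auto
      have eq: "remdups_adj x' = remdups_adj y'" using rx ry less.prems(3) by simp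
      show ?thesis
      proof (cases "x' = []")
        case True
        then have "y' = []" using eq by (metis remdups_adj_Nil_iff)
        then show ?thesis using True x y ab
          by (auto simp: warping_path_def intro!: exI[of _ "[(1,1)]"])
      next
        case False
        then have "y' \<noteq> []" using eq by auto
        then obtain p where p: "warping_path (length x') (length y') p" "\<forall>(i,j)\<in>set p. x'!(i-1) = y'!(j-1)"
          using less.hyps[of x' y'] False eq x y by auto
        have "warping_path (length x) (length y) ((1,1) # map (\<lambda>(i,j). (i+1, j+1)) p)"
          using wp_cons[OF p(1), of 1 1] x y by simp
        moreover have "\<forall>(i,j)\<in>set ((1,1) # map (\<lambda>(i,j). (i+1, j+1)) p). x!(i-1) = y!(j-1)"
        proof -
          have "x!0 = y!0" using x y ab by simp
          moreover have "x!(i+1-1) = y!(j+1-1)" if "(i,j) \<in> set p" for i j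
            using p(2) that bnd[OF p(1) that] x y by (auto simp: nth_Cons')
          ultimately show ?thesis by auto
        qed
        ultimately show ?thesis by blast
      qed
    qed
  qed
qed

lemma stut: "s \<noteq> [] \<Longrightarrow> (\<forall>l. Suc l < length s \<longrightarrow> s!Suc l = s!l \<or> s!Suc l = Suc (s!l)) \<Longrightarrow>
  hd s \<le> last s \<and> remdups_adj (map f s) = remdups_adj (map f [hd s..<Suc (last s)])"
proof (induction s)
  case Nil then show ?case by simp
next
  case (Cons a s)
  show ?case
  proof (cases "s = []")
    case True then show ?thesis by simp
  next
    case False
    have st: "\<forall>l. Suc l < length s \<longrightarrow> s!Suc l = s!l \<or> s!Suc l = Suc (s!l)"
      using Cons.prems(2) by (metis Suc_less_eq length_Cons nth_Cons_Suc)
    have IH: "hd s \<le> last s" "remdups_adj (map f s) = remdups_adj (map f [hd s..<Suc (last s)])"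
      using Cons.IH[OF False st] by auto
    have "s!0 = a \<or> s!0 = Suc a" using Cons.prems(2)[rule_format, of 0] False by simp
    then have h: "hd s = a \<or> hd s = Suc a" using False by (simp add: hd_conv_nth)
    obtain t where t: "s = hd s # t" using False by (cases s) auto
    show ?thesis
    proof (cases "hd s = a")
      case True
      have "remdups_adj (map f (a#s)) = remdups_adj (f a # f a # map f t)" using t True by (metis list.simps(9))
      also have "\<dots> = remdups_adj (map f s)" using t True by (metis list.simps(9) remdups_adj.simps(3))
      finally show ?thesis using IH True False by simp
    next
      case F: False
      then have hs: "hd s = Suc a" using h by simp
      have "remdups_adj (map f (a#s)) = remdups_adj (f a # map f [Suc a..<Suc (last s)])"
        using ra_cong[OF IH(2)] hs by simp
      also have "f a # map f [Suc a..<Suc (last s)] = map f [a..<Suc (last s)]"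
        using IH(1) hs by (simp add: upt_conv_Cons)
      finally show ?thesis using IH hs False by simp
    qed
  qed
qed



lemma wp_len: assumes w: "warping_path m n p" shows "length p \<le> m + n"
proof -
  from w have ne: "p \<noteq> []" and h: "hd p = (1,1)" and l: "last p = (m,n)"
    and s: "\<forall>l. Suc l < length p \<longrightarrow>
        (fst (p ! Suc l), snd (p ! Suc l)) \<in>
          {(fst (p ! l) + 1, snd (p ! l)), (fst (p ! l), snd (p ! l) + 1),
           (fst (p ! l) + 1, snd (p ! l) + 1)}"
    unfolding warping_path_def by auto
  have k: "k < length p \<Longrightarrow> k + 2 \<le> fst(p!k) + snd(p!k)" for k
  proof (induction k)
    case 0 then show ?case using h ne by (simp add: hd_conv_nth)
  next
    case (Suc k)
    have m: "(fst (p ! Suc k), snd (p ! Suc k)) \<in>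
          {(fst (p ! k) + 1, snd (p ! k)), (fst (p ! k), snd (p ! k) + 1),
           (fst (p ! k) + 1, snd (p ! k) + 1)}" using s[rule_format, OF Suc.prems] .
    have "fst(p!k)+snd(p!k) + 1 \<le> fst(p!Suc k)+snd(p!Suc k)"
      using m by (simp only: insert_iff empty_iff prod.inject) (elim disjE conjE FalseE; linarith)
    moreover have "k + 2 \<le> fst(p!k)+snd(p!k)" using Suc.IH Suc.prems by simp
    ultimately show ?case by linarith
  qed
  have "last p = p ! (length p - 1)" using ne by (simp add: last_conv_nth)
  then have "p ! (length p - 1) = (m,n)" using l by simp
  then show ?thesis using k[of "length p - 1"] ne by simp
qed

lemma wp_finite: "finite (warping_paths m n)"
proof -
  have "warping_paths m n \<subseteq> {xs. set xs \<subseteq> {1..m}\<times>{1..n} \<and> length xs \<le> m+n}"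
    unfolding warping_paths_def using wp_len by (auto simp: warping_path_def)
  moreover have "finite {xs. set xs \<subseteq> {1..m}\<times>{1..n} \<and> length xs \<le> m+n}"
    by (rule finite_lists_length_le) simp
  ultimately show ?thesis by (rule finite_subset)
qed


lemma cost_nonneg: "0 \<le> path_cost x y p"
  unfolding path_cost_def by (rule sum_list_nonneg) auto

lemma cost_zero: "path_cost x y p = 0 \<longleftrightarrow> (\<forall>(i,j)\<in>set p. x!(i-1) = y!(j-1))"
  unfolding path_cost_def by (subst sum_list_nonneg_eq_0_iff) auto

lemma dtw_zero:
  assumes "x \<noteq> []" "y \<noteq> []"
  shows "dtw x y = 0 \<longleftrightarrow> (\<exists>p. warping_path (length x) (length y) p \<and> (\<forall>(i,j)\<in>set p. x!(i-1) = y!(j-1)))"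
proof -
  let ?W = "warping_paths (length x) (length y)"
  let ?A = "(\<lambda>p. sqrt (path_cost x y p)) ` ?W"
  have fin: "finite ?A" using wp_finite by simp
  obtain q where "warping_path (length (replicate (length x) (0::real))) (length (replicate (length y) (0::real))) q"
    using path_exists[of "replicate (length x) (0::real)" "replicate (length y) 0"] assms
    by (auto simp: remdups_adj_replicate)
  then have "q \<in> ?W" by (simp add: warping_paths_def)
  then have ne: "?A \<noteq> {}" by auto
  have nn: "\<forall>a\<in>?A. 0 \<le> a" using cost_nonneg by auto
  show ?thesis
  proof
    assume "dtw x y = 0"
    then have "0 \<in> ?A" using Min_in[OF fin ne] unfolding dtw_def by simp
    then obtain p where "p \<in> ?W" "path_cost x y p = 0" by auto
    then show "\<exists>p. warping_path (length x) (length y) p \<and> (\<forall>(i,j)\<in>set p. x!(i-1) = y!(j-1))"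
      using cost_zero by (auto simp: warping_paths_def)
  next
    assume "\<exists>p. warping_path (length x) (length y) p \<and> (\<forall>(i,j)\<in>set p. x!(i-1) = y!(j-1))"
    then obtain p where "p \<in> ?W" "path_cost x y p = 0" using cost_zero by (auto simp: warping_paths_def)
    then have "0 \<in> ?A" by force
    then have "Min ?A \<le> 0" using Min_le[OF fin] by blast
    moreover have "0 \<le> Min ?A" using Min_ge_iff[OF fin ne] nn by auto
    ultimately show "dtw x y = 0" unfolding dtw_def by simp
  qed
qed


lemma path_ra:
  fixes x y :: "real list"
  assumes w: "warping_path (length x) (length y) p" and c: "\<forall>(i,j)\<in>set p. x!(i-1) = y!(j-1)"
  shows "remdups_adj x = remdups_adj y"
proof -
  from w have ne: "p \<noteq> []" and h: "hd p = (1,1)" and l: "last p = (length x, length y)"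
    and s: "\<forall>l. Suc l < length p \<longrightarrow>
        (fst (p ! Suc l), snd (p ! Suc l)) \<in>
          {(fst (p ! l) + 1, snd (p ! l)), (fst (p ! l), snd (p ! l) + 1),
           (fst (p ! l) + 1, snd (p ! l) + 1)}"
    unfolding warping_path_def by auto
  have gen: "remdups_adj (map (\<lambda>i. z!(i-1)) (map g p)) = remdups_adj z"
    if g1: "g (hd p) = 1" and gl: "g (last p) = length z"
      and gs: "\<forall>l. Suc l < length p \<longrightarrow> g (p!Suc l) = g (p!l) \<or> g (p!Suc l) = Suc (g (p!l))"
    for g :: "nat \<times> nat \<Rightarrow> nat" and z :: "real list"
  proof -
    have "remdups_adj (map (\<lambda>i. z!(i-1)) (map g p)) =
      remdups_adj (map (\<lambda>i. z!(i-1)) [hd (map g p)..<Suc (last (map g p))])"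
    proof -
      have "\<forall>l. Suc l < length (map g p) \<longrightarrow> map g p ! Suc l = map g p ! l \<or> map g p ! Suc l = Suc (map g p ! l)"
        using gs by simp
      moreover have "map g p \<noteq> []" using ne by simp
      ultimately show ?thesis using stut by blast
    qed
    also have "[hd (map g p)..<Suc (last (map g p))] = [1..<Suc (length z)]"
      using g1 gl ne by (simp add: hd_map last_map)
    also have "map (\<lambda>i. z!(i-1)) [1..<Suc (length z)] = z"
    proof -
      have "[1..<Suc (length z)] = map Suc [0..<length z]" by (simp only: map_Suc_upt) simp
      moreover have "map ((\<lambda>i. z ! (i - Suc 0)) \<circ> Suc) [0..<length z] = map (\<lambda>i. z!i) [0..<length z]"
        by (simp add: comp_def del: upt_Suc)
      ultimately show ?thesis by (simp add: map_nth del: upt_Suc)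
    qed
    finally show ?thesis .
  qed
  have "remdups_adj (map (\<lambda>i. x!(i-1)) (map fst p)) = remdups_adj x"
  proof (rule gen[of fst x])
    show "fst (hd p) = 1" using h by simp
    show "fst (last p) = length x" using l by simp
    show "\<forall>l. Suc l < length p \<longrightarrow> fst (p!Suc l) = fst (p!l) \<or> fst (p!Suc l) = Suc (fst (p!l))"
    proof (intro allI impI)
      fix l assume "Suc l < length p"
      then show "fst (p!Suc l) = fst (p!l) \<or> fst (p!Suc l) = Suc (fst (p!l))"
        using s[rule_format, of l] by auto
    qed
  qed
  moreover have "remdups_adj (map (\<lambda>i. y!(i-1)) (map snd p)) = remdups_adj y"
  proof (rule gen[of snd y])
    show "snd (hd p) = 1" using h by simp
    show "snd (last p) = length y" using l by simp
    show "\<forall>l. Suc l < length p \<longrightarrow> snd (p!Suc l) = snd (p!l) \<or> snd (p!Suc l) = Suc (snd (p!l))"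
    proof (intro allI impI)
      fix l assume "Suc l < length p"
      then show "snd (p!Suc l) = snd (p!l) \<or> snd (p!Suc l) = Suc (snd (p!l))"
        using s[rule_format, of l] by auto
    qed
  qed
  moreover have "map (\<lambda>i. x!(i-1)) (map fst p) = map (\<lambda>i. y!(i-1)) (map snd p)"
    unfolding map_map
  proof (rule map_cong[OF refl])
    fix a assume a: "a \<in> set p"
    obtain i j where "a = (i,j)" by (cases a)
    then show "((\<lambda>i. x!(i-1)) \<circ> fst) a = ((\<lambda>i. y!(i-1)) \<circ> snd) a" using c a by auto
  qed
  ultimately show ?thesis by metis
qed


theorem proposition2:
  fixes x :: "real list"
  assumes "time_series x"
  shows "{y. time_series y \<and> dtw x y = 0} = {y. time_series y \<and> expansion y (condensed x)}"
proof -
  have x: "x \<noteq> []" using assms by (simp add: time_series_def)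
  have key: "dtw x y = 0 \<longleftrightarrow> expansion y (remdups_adj x)" if y: "y \<noteq> []" for y
  proof -
    have "dtw x y = 0 \<longleftrightarrow> remdups_adj x = remdups_adj y"
      using dtw_zero[OF x y] path_ra path_exists[OF x y] by blast
    also have "\<dots> \<longleftrightarrow> expansion y (remdups_adj x)" using exp_iff[OF y] by metis
    finally show ?thesis .
  qed
  show ?thesis
  proof (rule set_eqI)
    fix y
    show "y \<in> {y. time_series y \<and> dtw x y = 0} \<longleftrightarrow> y \<in> {y. time_series y \<and> expansion y (condensed x)}"
      using key[of y] unfolding time_series_def condensed_def by blast
  qed
qed

end
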